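(* Let $m\ge 1$ and $n\ge 3$ be odd integers. Then there exists a $\Delta$-permutation $\psi$ of $\mathbb{Z}_m\times\mathbb{Z}_{2n}$ such that (1) $\Delta=[\,^{2mn-6}(1,0),\ ^{3}(2,0),\ ^{1}(0,2),\ ^{1}(0,n-2),\ ^{1}(0,n)]$, and (2) $\psi(0,0)=(0,n)$ and $\psi(0,n)=(0,n+2)$.
   Context: The notation $[\,^{\alpha_1}a_1,\ldots,\,^{\alpha_t}a_t]$ denotes the multiset containing $\alpha_i$ copies of $a_i$. A $v$-list of a group is a multiset of $v$ elements of the group. Given a group $\Gamma$ (written additively) of order $v$ and a $v$-list $\Delta$ of $\Gamma$, a permutation $\varphi$ of $\Gamma$ is a $\Delta$-permutation if the multiset $[\varphi(a)-a \mid a\in\Gamma]$ equals $\Delta$. *)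

theory Defs
  imports "HOL-Library.Multiset"
begin

text \<open>The group Z_m x Z_k, with elements represented by their canonical
  representatives (a, b), 0 \<le> a < m, 0 \<le> b < k, and componentwise
  addition/subtraction modulo m and k.\<close>

definition zgrp :: "int \<Rightarrow> int \<Rightarrow> (int \<times> int) set" where
  "zgrp m k = {0..<m} \<times> {0..<k}"

definition zsub :: "int \<Rightarrow> int \<Rightarrow> int \<times> int \<Rightarrow> int \<times> int \<Rightarrow> int \<times> int" where
  "zsub m k x y = ((fst x - fst y) mod m, (snd x - snd y) mod k)"

definition zel :: "int \<Rightarrow> int \<Rightarrow> int \<Rightarrow> int \<Rightarrow> int \<times> int" where
  "zel m k a b = (a mod m, b mod k)"

definition is_Delta_perm ::
  "int \<Rightarrow> int \<Rightarrow> (int \<times> int) multiset \<Rightarrow> (int \<times> int \<Rightarrow> int \<times> int) \<Rightarrow> bool" where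
  "is_Delta_perm m k Delta phi \<longleftrightarrow>
     bij_betw phi (zgrp m k) (zgrp m k) \<and>
     image_mset (\<lambda>a. zsub m k (phi a) a) (mset_set (zgrp m k)) = Delta"

end

theory Submission
  imports Defs
begin

definition psi :: "int \<Rightarrow> int \<Rightarrow> int \<times> int \<Rightarrow> int \<times> int" where
  "psi M N x =
    (if x = (0,0) then (0,N)
     else if x = (0,N) then (0,N+2)
     else if x = (0,N+2) then (0,0)
     else if snd x \<in> {0,N,N+2} then (if fst x = M-1 then (1 mod M, snd x) else (fst x + 1, snd x))
     else ((fst x + 1) mod M, snd x))"

definition phi :: "int \<Rightarrow> int \<Rightarrow> int \<times> int \<Rightarrow> int \<times> int" where
  "phi M N x =
    (if x = (0,N) then (0,0)
     else if x = (0,N+2) then (0,N)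
     else if x = (0,0) then (0,N+2)
     else if snd x \<in> {0,N,N+2} then (if fst x = 1 then (M-1, snd x) else (fst x - 1, snd x))
     else ((fst x - 1) mod M, snd x))"

lemma mod_succ: "0 \<le> a \<Longrightarrow> a < (M::int) \<Longrightarrow> (a+1) mod M = (if a = M-1 then 0 else a+1)"
  by (auto simp: mod_pos_pos_trivial)

lemma mod_m1: "0 < (M::int) \<Longrightarrow> -1 mod M = M - 1"
  by (cases "M = 1") (auto simp: zmod_zminus1_eq_if mod_pos_pos_trivial)

lemma psi_in:
  fixes M N :: int assumes "M \<ge> 1" "N \<ge> 3" "x \<in> zgrp M (2*N)"
  shows "psi M N x \<in> zgrp M (2*N)"
  using assms by (cases x) (auto simp: psi_def zgrp_def mod_succ)

lemma phi_psi:
  fixes M N :: int assumes "M \<ge> 1" "N \<ge> 3" "x \<in> zgrp M (2*N)"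
  shows "phi M N (psi M N x) = x"
proof (cases x)
  case (Pair a b)
  show ?thesis using assms unfolding Pair
    by (auto simp: psi_def phi_def zgrp_def mod_succ mod_pos_pos_trivial mod_m1)
qed

lemma psi_bij:
  fixes M N :: int assumes "M \<ge> 1" "N \<ge> 3"
  shows "bij_betw (psi M N) (zgrp M (2*N)) (zgrp M (2*N))"
proof -
  have fin: "finite (zgrp M (2*N))" by (simp add: zgrp_def)
  have inj: "inj_on (psi M N) (zgrp M (2*N))"
    by (rule inj_on_inverseI[where g="phi M N"]) (rule phi_psi[OF assms])
  have "psi M N ` zgrp M (2*N) \<subseteq> zgrp M (2*N)" using psi_in[OF assms] by blast
  then have "psi M N ` zgrp M (2*N) = zgrp M (2*N)" using endo_inj_surj fin inj by blast
  then show ?thesis using inj by (simp add: bij_betw_def)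
qed

lemma psi_mset:
  fixes M N :: int assumes M: "M \<ge> 1" and N: "N \<ge> 3"
  defines "G \<equiv> zgrp M (2*N)"
  defines "T \<equiv> {(0,0),(0,N),(0,N+2)} :: (int\<times>int) set"
  defines "E \<equiv> ({M-1} \<times> {0,N,N+2}) - T"
  defines "R \<equiv> G - T - E"
  defines "d \<equiv> (\<lambda>x. zsub M (2*N) (psi M N x) x)"
  shows "image_mset d (mset_set G) =
     replicate_mset (card R) (zel M (2*N) 1 0) + replicate_mset (card E) (zel M (2*N) 2 0)
     + {# zel M (2*N) 0 2, zel M (2*N) 0 (N - 2), zel M (2*N) 0 N #}"
proof -
  have TG: "T \<subseteq> G" using M N by (auto simp: T_def G_def zgrp_def)
  have EG: "E \<subseteq> G" using M N by (auto simp: E_def G_def zgrp_def)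
  have fG: "finite G" by (simp add: G_def zgrp_def)
  have GU: "G = R \<union> E \<union> T" using TG EG by (auto simp: R_def)
  have fE: "finite E" by (simp add: E_def)
  have fR: "finite R" using fG by (simp add: R_def)
  have fT: "finite T" by (simp add: T_def)
  have d1: "(R \<union> E) \<inter> T = {}" by (auto simp: R_def E_def)
  have d2: "R \<inter> E = {}" by (auto simp: R_def)
  have "mset_set G = mset_set (R \<union> E) + mset_set T"
    unfolding GU using fE fR fT d1 by (intro mset_set_Union) auto
  also have "mset_set (R \<union> E) = mset_set R + mset_set E"
    using fE fR d2 by (intro mset_set_Union) auto
  finally have "mset_set G = mset_set R + mset_set E + mset_set T" .
  then have split: "image_mset d (mset_set G) = image_mset d (mset_set R) + image_mset d (mset_set E) + image_mset d (mset_set T)"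
    by simp
  have dR: "d x = zel M (2*N) 1 0" if "x \<in> R" for x
  proof (cases x)
    case (Pair a b)
    show ?thesis using that M N unfolding Pair
      by (auto simp: R_def E_def T_def G_def zgrp_def d_def psi_def zsub_def zel_def mod_diff_left_eq)
  qed
  have dE: "d x = zel M (2*N) 2 0" if "x \<in> E" for x
  proof (cases x)
    case (Pair a b)
    have "(2 - M) mod M = 2 mod M" by (simp add: mod_eq_dvd_iff)
    then show ?thesis using that M N unfolding Pair
      by (auto simp: E_def T_def d_def psi_def zsub_def zel_def mod_diff_left_eq)
  qed
  have iR: "image_mset d (mset_set R) = replicate_mset (card R) (zel M (2*N) 1 0)"
  proof -
    have "image_mset d (mset_set R) = image_mset (\<lambda>_. zel M (2*N) 1 0) (mset_set R)"
      by (rule image_mset_cong) (use dR fR in auto)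
    then show ?thesis by (simp add: image_mset_const_eq)
  qed
  have iE: "image_mset d (mset_set E) = replicate_mset (card E) (zel M (2*N) 2 0)"
  proof -
    have "image_mset d (mset_set E) = image_mset (\<lambda>_. zel M (2*N) 2 0) (mset_set E)"
      by (rule image_mset_cong) (use dE fE in auto)
    then show ?thesis by (simp add: image_mset_const_eq)
  qed
  have m1: "(- (N + 2)) mod (2*N) = (N - 2) mod (2*N)" by (simp add: mod_eq_dvd_iff)
  have iT: "image_mset d (mset_set T) = {# zel M (2*N) 0 2, zel M (2*N) 0 (N - 2), zel M (2*N) 0 N #}"
    using M N m1 by (simp add: T_def d_def psi_def zsub_def zel_def add_mset_commute)
  show ?thesis using split iR iE iT by simp
qed

lemma rep_add: "replicate_mset (a + b) x = replicate_mset a x + replicate_mset b x"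
  by (rule multiset_eqI) simp

lemma psi_cards:
  fixes M N :: int assumes M: "M \<ge> 1" and N: "N \<ge> 3"
  defines "G \<equiv> zgrp M (2*N)"
  defines "T \<equiv> {(0,0),(0,N),(0,N+2)} :: (int\<times>int) set"
  defines "E \<equiv> ({M-1} \<times> {0,N,N+2}) - T"
  defines "R \<equiv> G - T - E"
  shows "card E = (if M = 1 then 0 else 3)" "card R = nat (2*M*N) - 3 - card E"
proof -
  have TG: "T \<subseteq> G" using M N by (auto simp: T_def G_def zgrp_def)
  have EG: "E \<subseteq> G" using M N by (auto simp: E_def G_def zgrp_def)
  have fG: "finite G" by (simp add: G_def zgrp_def)
  have nm: "nat (2*M*N) = nat M * (2 * nat N)"
  proof -
    have "nat (2*M*N) = nat (2*M) * nat N" using M N by (simp add: nat_mult_distrib)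
    also have "nat (2*M) = 2 * nat M" using M by (simp add: nat_mult_distrib)
    finally show ?thesis by simp
  qed
  have cG: "card G = nat (2*M*N)"
    unfolding nm by (simp add: G_def zgrp_def card_cartesian_product nat_mult_distrib)
  have cT: "card T = 3" using N by (simp add: T_def)
  show cE: "card E = (if M = 1 then 0 else 3)"
  proof (cases "M = 1")
    case True
    then have "E = {}" by (auto simp: E_def T_def)
    then show ?thesis using True by simp
  next
    case False
    then have "E = {(M-1,0),(M-1,N),(M-1,N+2)}" using M by (auto simp: E_def T_def)
    then show ?thesis using False N by simp
  qed
  have "card R = card (G - T) - card E"
    unfolding R_def using EG fG by (intro card_Diff_subset) (auto simp: E_def finite_subset)
  also have "card (G - T) = card G - card T" using TG fG by (intro card_Diff_subset) (auto simp: T_def)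
  finally show "card R = nat (2*M*N) - 3 - card E" using cG cT by simp
qed

theorem mainTheorem3:
  fixes m n :: nat
  assumes "m \<ge> 1" and "odd m" and "n \<ge> 3" and "odd n"
  shows "\<exists>psi. is_Delta_perm (int m) (2 * int n)
            (replicate_mset (2 * m * n - 6) (zel (int m) (2 * int n) 1 0)
             + replicate_mset 3 (zel (int m) (2 * int n) 2 0)
             + {# zel (int m) (2 * int n) 0 2,
                  zel (int m) (2 * int n) 0 (int n - 2),
                  zel (int m) (2 * int n) 0 (int n) #}) psi
          \<and> psi (0, 0) = (0, int n)
          \<and> psi (0, int n) = (0, int n + 2)"
proof (intro exI conjI)
  have M: "int m \<ge> 1" and N: "int n \<ge> 3" using assms by auto
  define T where "T = ({(0,0),(0,int n),(0,int n+2)} :: (int\<times>int) set)"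
  define E where "E = ({int m-1} \<times> {0,int n,int n+2}) - T"
  define R where "R = zgrp (int m) (2*int n) - T - E"
  note mm = psi_mset[OF M N, folded T_def, folded E_def, folded R_def]
  note cc = psi_cards[OF M N, folded T_def, folded E_def, folded R_def]
  have nn: "nat (2 * int m * int n) = 2 * m * n" by (simp add: nat_mult_distrib)
  have eq: "replicate_mset (card R) (zel (int m) (2 * int n) 1 0) + replicate_mset (card E) (zel (int m) (2 * int n) 2 0)
    = replicate_mset (2 * m * n - 6) (zel (int m) (2 * int n) 1 0) + replicate_mset 3 (zel (int m) (2 * int n) 2 0)"
  proof (cases "m = 1")
    case True
    then have z: "zel (int m) (2 * int n) 1 0 = zel (int m) (2 * int n) 2 0" by (simp add: zel_def)
    have "card R = (2 * m * n - 6) + 3" using cc True nn assms by simp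
    then show ?thesis using cc True z by (simp only: rep_add) simp
  next
    case False
    then show ?thesis using cc nn assms by simp
  qed
  show "is_Delta_perm (int m) (2 * int n)
            (replicate_mset (2 * m * n - 6) (zel (int m) (2 * int n) 1 0)
             + replicate_mset 3 (zel (int m) (2 * int n) 2 0)
             + {# zel (int m) (2 * int n) 0 2,
                  zel (int m) (2 * int n) 0 (int n - 2),
                  zel (int m) (2 * int n) 0 (int n) #}) (psi (int m) (int n))"
    unfolding is_Delta_perm_def using psi_bij[OF M N] mm eq by simp
  show "psi (int m) (int n) (0, 0) = (0, int n)" by (simp add: psi_def)
  show "psi (int m) (int n) (0, int n) = (0, int n + 2)" using assms by (simp add: psi_def)
qed

end
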